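(* The functor $G:\mathbf{cMet}_1\to\mathrm{ER}(\mathbf U)$, $G(X,d)=(X,d)$, $G(f)=[(x,y)\mapsto d(f(x),y)]$, is an equivalence of categories.
   Context: $\mathbf{cMet}_1$: complete metric spaces with all distances $\le 1$ and uniformly continuous maps. For functions $\alpha,\beta:Z\to[0,1]$ write $\alpha\sqsubseteq\beta$ if for every $\varepsilon>0$ there exists $\delta>0$ such that for all $z\in Z$, $\alpha(z)\le\delta$ implies $\beta(z)\le\varepsilon$. The category $\mathrm{ER}(\mathbf U)$: objects are pairs $(X,R)$ with $X$ a set and $R:X\times X\to[0,1]$ such that $R(x,x)=0$ for all $x$, $R(x,y)\sqsubseteq R(y,x)$ as functions of $(x,y)$, and $\max(R(x,y),R(y,z))\sqsubseteq R(x,z)$ as functions of $(x,y,z)$. A functional relation $(X,R)\to(Y,S)$ is a function $F:X\times Y\to[0,1]$ with $\max(F(x,y),R(x,x'),S(y,y'))\sqsubseteq F(x',y')$ as functions of $(x,x',y,y')$, $\max(F(x,y),F(x,y'))\sqsubseteq S(y,y')$ as functions of $(x,y,y')$, and $\inf_{y\in Y}F(x,y)=0$ for all $x$. Morphisms are equivalence classes $[F]$ of functional relations, with $F\sim F'$ iff $F\sqsubseteq F'$ as functions on $X\times Y$; identity $[R]$; composite of $[F]$ and $[H]$ is $[(x,z)\mapsto\inf_y\max(F(x,y),H(y,z))]$. *)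

theory Defs
  imports "HOL-Analysis.Analysis"
begin

definition cMet1_obj :: "'u set \<Rightarrow> ('u \<Rightarrow> 'u \<Rightarrow> real) \<Rightarrow> bool" where
  "cMet1_obj X d \<longleftrightarrow> Metric_space X d \<and> Metric_space.mcomplete X d
      \<and> (\<forall>x\<in>X. \<forall>y\<in>X. d x y \<le> 1)"

text \<open>Morphisms: uniformly continuous maps; two morphisms are equal iff they agree on X.\<close>
definition cMet1_hom ::
  "'u set \<Rightarrow> ('u \<Rightarrow> 'u \<Rightarrow> real) \<Rightarrow> 'u set \<Rightarrow> ('u \<Rightarrow> 'u \<Rightarrow> real) \<Rightarrow> ('u \<Rightarrow> 'u) \<Rightarrow> bool" where
  "cMet1_hom X d Y e f \<longleftrightarrow> uniformly_continuous_map (metric (X,d)) (metric (Y,e)) f"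

definition sqle :: "'z set \<Rightarrow> ('z \<Rightarrow> real) \<Rightarrow> ('z \<Rightarrow> real) \<Rightarrow> bool" where
  "sqle Z \<alpha> \<beta> \<longleftrightarrow> (\<forall>\<epsilon>>0. \<exists>\<delta>>0. \<forall>z\<in>Z. \<alpha> z \<le> \<delta> \<longrightarrow> \<beta> z \<le> \<epsilon>)"

definition ER_obj :: "'u set \<Rightarrow> ('u \<Rightarrow> 'u \<Rightarrow> real) \<Rightarrow> bool" where
  "ER_obj X R \<longleftrightarrow>
     (\<forall>x\<in>X. \<forall>y\<in>X. 0 \<le> R x y \<and> R x y \<le> 1)
   \<and> (\<forall>x\<in>X. R x x = 0)
   \<and> sqle (X \<times> X) (\<lambda>(x,y). R x y) (\<lambda>(x,y). R y x)
   \<and> sqle (X \<times> X \<times> X) (\<lambda>(x,y,z). max (R x y) (R y z)) (\<lambda>(x,y,z). R x z)"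

text \<open>Functional relations (X,R) \<rightarrow> (Y,S). The condition inf_y F(x,y) = 0 is written out
  (F takes values in [0,1]).\<close>
definition func_rel ::
  "'u set \<Rightarrow> ('u \<Rightarrow> 'u \<Rightarrow> real) \<Rightarrow> 'u set \<Rightarrow> ('u \<Rightarrow> 'u \<Rightarrow> real) \<Rightarrow> ('u \<Rightarrow> 'u \<Rightarrow> real) \<Rightarrow> bool" where
  "func_rel X R Y S F \<longleftrightarrow>
     (\<forall>x\<in>X. \<forall>y\<in>Y. 0 \<le> F x y \<and> F x y \<le> 1)
   \<and> sqle (X \<times> X \<times> Y \<times> Y) (\<lambda>(x,x',y,y'). max (F x y) (max (R x x') (S y y')))
                            (\<lambda>(x,x',y,y'). F x' y')
   \<and> sqle (X \<times> Y \<times> Y) (\<lambda>(x,y,y'). max (F x y) (F x y')) (\<lambda>(x,y,y'). S y y')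
   \<and> (\<forall>x\<in>X. \<forall>\<epsilon>>0. \<exists>y\<in>Y. F x y < \<epsilon>)"

text \<open>Equality of morphisms [F] = [F'] in ER(U): F \<sqsubseteq> F' on X \<times> Y.\<close>
definition ER_eq ::
  "'u set \<Rightarrow> 'u set \<Rightarrow> ('u \<Rightarrow> 'u \<Rightarrow> real) \<Rightarrow> ('u \<Rightarrow> 'u \<Rightarrow> real) \<Rightarrow> bool" where
  "ER_eq X Y F F' \<longleftrightarrow> sqle (X \<times> Y) (\<lambda>(x,y). F x y) (\<lambda>(x,y). F' x y)"

definition ER_comp ::
  "'u set \<Rightarrow> ('u \<Rightarrow> 'u \<Rightarrow> real) \<Rightarrow> ('u \<Rightarrow> 'u \<Rightarrow> real) \<Rightarrow> ('u \<Rightarrow> 'u \<Rightarrow> real)" where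
  "ER_comp Y F H = (\<lambda>x z. INF y\<in>Y. max (F x y) (H y z))"

definition G_hom :: "('u \<Rightarrow> 'u \<Rightarrow> real) \<Rightarrow> ('u \<Rightarrow> 'u) \<Rightarrow> ('u \<Rightarrow> 'u \<Rightarrow> real)" where
  "G_hom e f = (\<lambda>x y. e (f x) y)"

text \<open>G is a well-defined functor cMet_1 \<rightarrow> ER(U) (on objects G(X,d) = (X,d)).\<close>
definition G_is_functor :: "'u itself \<Rightarrow> bool" where
  "G_is_functor _ \<longleftrightarrow>
     (\<forall>(X::'u set) d. cMet1_obj X d \<longrightarrow> ER_obj X d)
   \<and> (\<forall>(X::'u set) d Y e f. cMet1_obj X d \<longrightarrow> cMet1_obj Y e \<longrightarrow> cMet1_hom X d Y e f
        \<longrightarrow> func_rel X d Y e (G_hom e f))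
   \<and> (\<forall>(X::'u set) d. cMet1_obj X d \<longrightarrow> ER_eq X X (G_hom d id) d)
   \<and> (\<forall>(X::'u set) d Y e Z c f g. cMet1_obj X d \<longrightarrow> cMet1_obj Y e \<longrightarrow> cMet1_obj Z c
        \<longrightarrow> cMet1_hom X d Y e f \<longrightarrow> cMet1_hom Y e Z c g
        \<longrightarrow> ER_eq X Z (G_hom c (g \<circ> f)) (ER_comp Y (G_hom e f) (G_hom c g)))"

definition G_faithful :: "'u itself \<Rightarrow> bool" where
  "G_faithful _ \<longleftrightarrow>
     (\<forall>(X::'u set) d Y e f g. cMet1_obj X d \<longrightarrow> cMet1_obj Y e
        \<longrightarrow> cMet1_hom X d Y e f \<longrightarrow> cMet1_hom X d Y e g
        \<longrightarrow> ER_eq X Y (G_hom e f) (G_hom e g) \<longrightarrow> (\<forall>x\<in>X. f x = g x))"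

definition G_full :: "'u itself \<Rightarrow> bool" where
  "G_full _ \<longleftrightarrow>
     (\<forall>(X::'u set) d Y e F. cMet1_obj X d \<longrightarrow> cMet1_obj Y e \<longrightarrow> func_rel X d Y e F
        \<longrightarrow> (\<exists>f. cMet1_hom X d Y e f \<and> ER_eq X Y F (G_hom e f)))"

definition G_ess_surj :: "'u itself \<Rightarrow> bool" where
  "G_ess_surj _ \<longleftrightarrow>
     (\<forall>(X::'u set) R. ER_obj X R \<longrightarrow>
        (\<exists>(Y::'u set) e F H. cMet1_obj Y e \<and> func_rel X R Y e F \<and> func_rel Y e X R H
           \<and> ER_eq X X (ER_comp Y F H) R \<and> ER_eq Y Y (ER_comp X H F) e))"

definition G_equivalence :: "'u itself \<Rightarrow> bool" where
  "G_equivalence u \<longleftrightarrow> G_is_functor u \<and> G_full u \<and> G_faithful u \<and> G_ess_surj u"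

end

theory Submission
  imports Defs
begin


fun chv :: "'u set \<Rightarrow> ('u \<Rightarrow> 'u \<Rightarrow> real) \<Rightarrow> (nat \<Rightarrow> real) \<Rightarrow> 'u \<Rightarrow> ('u \<times> nat) list \<Rightarrow> 'u \<Rightarrow> bool" where
  "chv X S r x [] y = (x = y)"
| "chv X S r x (c # cs) y = (fst c \<in> X \<and> S x (fst c) \<le> r (snd c) \<and> chv X S r (fst c) cs y)"

definition chw :: "('u \<times> nat) list \<Rightarrow> real" where
  "chw cs = sum_list (map (\<lambda>c. (1/2::real) ^ snd c) cs)"

lemma chw_simps[simp]: "chw [] = 0" "chw (c # cs) = (1/2)^snd c + chw cs" "chw (as @ bs) = chw as + chw bs"
  by (auto simp: chw_def)

lemma chw_nonneg: "chw cs \<ge> 0"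
  by (induction cs) auto

lemma chv_append: "chv X S r x (as @ bs) y \<longleftrightarrow> (\<exists>q. chv X S r x as q \<and> chv X S r q bs y)"
  by (induction as arbitrary: x) auto

lemma chv_end_in: "chv X S r x cs y \<Longrightarrow> x \<in> X \<Longrightarrow> y \<in> X"
  by (induction cs arbitrary: x) auto

lemma split_list_weight:
  fixes f :: "'a \<Rightarrow> real"
  assumes "\<forall>w\<in>set ws. f w \<ge> 0"
  shows "0 \<le> c \<Longrightarrow> c < sum_list (map f ws) \<Longrightarrow>
    \<exists>as w bs. ws = as @ w # bs \<and> sum_list (map f as) \<le> c \<and> c < sum_list (map f as) + f w"
  using assms
proof (induction ws arbitrary: c)
  case Nil then show ?case by simp
next
  case (Cons y ys)
  show ?case
  proof (cases "c < f y")
    case True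
    then show ?thesis by (intro exI[of _ "[]"]) (use Cons in auto)
  next
    case False
    then have "0 \<le> c - f y" "c - f y < sum_list (map f ys)" using Cons.prems by auto
    from Cons.IH[OF this] Cons.prems obtain as w bs where
      "ys = as @ w # bs" "sum_list (map f as) \<le> c - f y" "c - f y < sum_list (map f as) + f w" by auto
    then show ?thesis by (intro exI[of _ "y # as"] exI[of _ w] exI[of _ bs]) auto
  qed
qed

lemma chain_key:
  fixes S :: "'u \<Rightarrow> 'u \<Rightarrow> real" and r :: "nat \<Rightarrow> real"
  assumes S0: "\<forall>x\<in>X. S x x = 0"
    and rpos: "\<forall>n. r n > 0"
    and rmono: "\<forall>m n. m \<le> n \<longrightarrow> r n \<le> r m"
    and S3: "\<forall>m. \<forall>a\<in>X. \<forall>b\<in>X. \<forall>c\<in>X. \<forall>e\<in>X. S a b \<le> r (Suc m) \<and> S b c \<le> r (Suc m) \<and> S c e \<le> r (Suc m) \<longrightarrow> S a e \<le> r m"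
  shows "x \<in> X \<Longrightarrow> chv X S r x cs y \<Longrightarrow> chw cs < (1/2)^m \<Longrightarrow> S x y \<le> r m"
proof (induction "length cs" arbitrary: cs x y m rule: less_induct)
  case less
  show ?case
  proof (cases "cs = []")
    case True
    have xy: "x = y" using less.prems(2) True by (metis chv.simps(1))
    have "S x x = 0" using S0 less.prems(1) by blast
    then have "S x y = 0" unfolding xy .
    moreover have "0 < r m" using rpos by blast
    ultimately show ?thesis by (metis less_imp_le)
  next
    case False
    have pos: "\<forall>w\<in>set cs. (\<lambda>c. (1/2::real) ^ snd c) w \<ge> 0" by auto
    have "chw cs > 0" using False by (cases cs) (auto intro: add_pos_nonneg chw_nonneg)
    then have "0 \<le> chw cs / 2" "chw cs / 2 < sum_list (map (\<lambda>c. (1/2::real) ^ snd c) cs)"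
      by (auto simp: chw_def)
    from split_list_weight[OF pos this] obtain as w bs where
      cs: "cs = as @ w # bs" and a1: "chw as \<le> chw cs / 2" and a2: "chw cs / 2 < chw as + (1/2)^snd w"
      by (auto simp: chw_def)
    obtain p n where w: "w = (p, n)" by force
    have tot: "chw cs = chw as + (1/2)^n + chw bs" using cs w by simp
    from less.prems(2) cs w obtain q where q1: "chv X S r x as q" and q2: "chv X S r q ((p,n) # bs) y"
      by (auto simp: chv_append)
    have qX: "q \<in> X" using chv_end_in[OF q1 less.prems(1)] .
    have pX: "p \<in> X" and Sqp: "S q p \<le> r n" and q3: "chv X S r p bs y" using q2 by auto
    have yX: "y \<in> X" using chv_end_in[OF q3 pX] .
    have hm: "(1/2::real)^(Suc m) = (1/2)^m / 2" by simp
    have A: "S x q \<le> r (Suc m)"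
      by (rule less.hyps[OF _ less.prems(1) q1]) (use cs a1 less.prems(3) hm in auto)
    have B: "S p y \<le> r (Suc m)"
      by (rule less.hyps[OF _ pX q3]) (use cs a2 tot less.prems(3) hm in auto)
    have "(1/2::real)^n < (1/2)^m" using tot chw_nonneg[of as] chw_nonneg[of bs] less.prems(3) by linarith
    then have "m < n" by (simp add: power_strict_decreasing_iff)
    then have C: "S q p \<le> r (Suc m)" using Sqp rmono by (meson Suc_leI order_trans)
    show ?thesis using S3 less.prems(1) qX pX yX A B C by blast
  qed
qed


lemma sqleD: "sqle Z a b \<Longrightarrow> \<epsilon> > 0 \<Longrightarrow> \<exists>\<delta>>0. \<forall>z\<in>Z. a z \<le> \<delta> \<longrightarrow> b z \<le> \<epsilon>"
  by (auto simp: sqle_def)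

lemma ER_sym: assumes "ER_obj X R" "\<epsilon> > 0"
  shows "\<exists>\<delta>>0. \<forall>x\<in>X. \<forall>y\<in>X. R x y \<le> \<delta> \<longrightarrow> R y x \<le> \<epsilon>"
proof -
  from assms obtain \<delta> where "\<delta>>0" "\<forall>z\<in>X\<times>X. (\<lambda>(x,y). R x y) z \<le> \<delta> \<longrightarrow> (\<lambda>(x,y). R y x) z \<le> \<epsilon>"
    unfolding ER_obj_def sqle_def by blast
  then show ?thesis by auto
qed

lemma ER_trans: assumes "ER_obj X R" "\<epsilon> > 0"
  shows "\<exists>\<delta>>0. \<forall>x\<in>X. \<forall>y\<in>X. \<forall>z\<in>X. R x y \<le> \<delta> \<longrightarrow> R y z \<le> \<delta> \<longrightarrow> R x z \<le> \<epsilon>"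
proof -
  from assms obtain \<delta> where "\<delta>>0" "\<forall>w\<in>X\<times>X\<times>X. (\<lambda>(x,y,z). max (R x y) (R y z)) w \<le> \<delta> \<longrightarrow> (\<lambda>(x,y,z). R x z) w \<le> \<epsilon>"
    unfolding ER_obj_def sqle_def by blast
  then show ?thesis by auto
qed

lemma S3_exists:
  assumes "ER_obj X R" "\<epsilon> > 0"
  shows "\<exists>\<delta>>0. \<delta> \<le> \<epsilon> \<and> (\<forall>a\<in>X. \<forall>b\<in>X. \<forall>c\<in>X. \<forall>e\<in>X.
     max (R a b) (R b a) \<le> \<delta> \<and> max (R b c) (R c b) \<le> \<delta> \<and> max (R c e) (R e c) \<le> \<delta> \<longrightarrow> max (R a e) (R e a) \<le> \<epsilon>)"
proof -
  obtain \<delta>1 where d1: "\<delta>1 > 0" "\<forall>x\<in>X. \<forall>y\<in>X. \<forall>z\<in>X. R x y \<le> \<delta>1 \<longrightarrow> R y z \<le> \<delta>1 \<longrightarrow> R x z \<le> \<epsilon>"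
    using ER_trans[OF assms] by blast
  obtain \<delta>2 where d2: "\<delta>2 > 0" "\<forall>x\<in>X. \<forall>y\<in>X. \<forall>z\<in>X. R x y \<le> \<delta>2 \<longrightarrow> R y z \<le> \<delta>2 \<longrightarrow> R x z \<le> \<delta>1"
    using ER_trans[OF assms(1) d1(1)] by blast
  define \<delta> where "\<delta> = min \<epsilon> (min \<delta>1 \<delta>2)"
  have "\<delta> > 0" "\<delta> \<le> \<epsilon>" using d1 d2 assms by (auto simp: \<delta>_def)
  moreover have "max (R a e) (R e a) \<le> \<epsilon>" if "a\<in>X" "b\<in>X" "c\<in>X" "e\<in>X"
     "max (R a b) (R b a) \<le> \<delta>" "max (R b c) (R c b) \<le> \<delta>" "max (R c e) (R e c) \<le> \<delta>" for a b c e
  proof -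
    have "R a c \<le> \<delta>1" using d2(2) that unfolding \<delta>_def by auto
    then have "R a e \<le> \<epsilon>" using d1(2) that unfolding \<delta>_def by auto
    moreover have "R e b \<le> \<delta>1" using d2(2) that unfolding \<delta>_def by auto
    then have "R e a \<le> \<epsilon>" using d1(2) that unfolding \<delta>_def by auto
    ultimately show ?thesis by simp
  qed
  ultimately show ?thesis by blast
qed

lemma metrization:
  fixes X :: "'u set" and R :: "'u \<Rightarrow> 'u \<Rightarrow> real"
  assumes ER: "ER_obj X R"
  shows "\<exists>d::'u \<Rightarrow> 'u \<Rightarrow> real. (\<forall>x\<in>X. d x x = 0) \<and> (\<forall>x\<in>X. \<forall>y\<in>X. d x y = d y x)
    \<and> (\<forall>x\<in>X. \<forall>y\<in>X. \<forall>z\<in>X. d x z \<le> d x y + d y z)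
    \<and> (\<forall>x\<in>X. \<forall>y\<in>X. 0 \<le> d x y \<and> d x y \<le> 1)
    \<and> (\<forall>\<epsilon>>0. \<exists>\<delta>>0. \<forall>x\<in>X. \<forall>y\<in>X. R x y \<le> \<delta> \<longrightarrow> d x y \<le> \<epsilon>)
    \<and> (\<forall>\<epsilon>>0. \<exists>\<delta>>0. \<forall>x\<in>X. \<forall>y\<in>X. d x y \<le> \<delta> \<longrightarrow> R x y \<le> \<epsilon>)"
proof -
  define S where "S x y = max (R x y) (R y x)" for x y
  have Rb: "\<forall>x\<in>X. \<forall>y\<in>X. 0 \<le> R x y \<and> R x y \<le> 1" and R0: "\<forall>x\<in>X. R x x = 0"
    using ER by (auto simp: ER_obj_def)
  have Sb: "0 \<le> S x y" "S x y \<le> 1" if "x\<in>X" "y\<in>X" for x y using Rb that by (auto simp: S_def le_max_iff_disj)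
  have Ssym: "S x y = S y x" for x y by (auto simp: S_def)
  have S0: "\<forall>x\<in>X. S x x = 0" using R0 by (auto simp: S_def)
  have "\<forall>\<epsilon>. \<exists>\<delta>. \<epsilon> > 0 \<longrightarrow> \<delta> > 0 \<and> \<delta> \<le> \<epsilon> \<and> (\<forall>a\<in>X. \<forall>b\<in>X. \<forall>c\<in>X. \<forall>e\<in>X.
     S a b \<le> \<delta> \<and> S b c \<le> \<delta> \<and> S c e \<le> \<delta> \<longrightarrow> S a e \<le> \<epsilon>)"
    using S3_exists[OF ER] unfolding S_def by blast
  then obtain df where df: "\<And>\<epsilon>. \<epsilon> > 0 \<Longrightarrow> df \<epsilon> > 0 \<and> df \<epsilon> \<le> \<epsilon> \<and> (\<forall>a\<in>X. \<forall>b\<in>X. \<forall>c\<in>X. \<forall>e\<in>X.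
     S a b \<le> df \<epsilon> \<and> S b c \<le> df \<epsilon> \<and> S c e \<le> df \<epsilon> \<longrightarrow> S a e \<le> \<epsilon>)"
    by metis
  define r where "r = rec_nat (1::real) (\<lambda>n x. min (df x) (x/2))"
  have r0: "r 0 = 1" and rS: "r (Suc n) = min (df (r n)) (r n / 2)" for n by (auto simp: r_def)
  have rpos: "r n > 0" for n
    by (induction n) (auto simp: r0 rS df)
  have rle: "r n \<le> (1/2)^n" for n
    by (induction n) (auto simp: r0 rS min_le_iff_disj)
  have rstep: "r (Suc n) \<le> r n" for n using rpos[of n] by (auto simp: rS)
  have rmono: "\<forall>m n. m \<le> n \<longrightarrow> r n \<le> r m"
    using rstep by (metis antimono_iff_le_Suc antimono_def)
  have S3: "\<forall>m. \<forall>a\<in>X. \<forall>b\<in>X. \<forall>c\<in>X. \<forall>e\<in>X. S a b \<le> r (Suc m) \<and> S b c \<le> r (Suc m) \<and> S c e \<le> r (Suc m) \<longrightarrow> S a e \<le> r m"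
  proof (intro allI ballI impI)
    fix m a b c e assume "a\<in>X" "b\<in>X" "c\<in>X" "e\<in>X" and h: "S a b \<le> r (Suc m) \<and> S b c \<le> r (Suc m) \<and> S c e \<le> r (Suc m)"
    have "r (Suc m) \<le> df (r m)" by (simp add: rS)
    then show "S a e \<le> r m" using df[OF rpos[of m]] h \<open>a\<in>X\<close> \<open>b\<in>X\<close> \<open>c\<in>X\<close> \<open>e\<in>X\<close> by force
  qed
  note key = chain_key[OF S0 allI[OF rpos] rmono S3]
  define d0 where "d0 x y = (INF cs \<in> {cs. chv X S r x cs y}. chw cs)" for x y
  have bdd: "bdd_below (chw ` {cs. chv X S r x cs y})" for x y
    by (rule bdd_belowI[of _ 0]) (auto simp: chw_nonneg)
  have single: "chv X S r x [(y,n)] y" if "y \<in> X" "S x y \<le> r n" for x y n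
    using that by simp
  have d0_le: "d0 x y \<le> chw cs" if "chv X S r x cs y" for x y cs
    unfolding d0_def by (rule cINF_lower[OF bdd]) (use that in auto)
  have d0_single: "d0 x y \<le> (1/2)^n" if "y \<in> X" "S x y \<le> r n" for x y n
    using d0_le[OF single[OF that]] by simp
  have ne: "{cs. chv X S r x cs y} \<noteq> {}" if "x \<in> X" "y \<in> X" for x y
    proof - have "chv X S r x [(y,0)] y" using that Sb[of x y] by (simp add: r0) then show ?thesis by blast qed
  have d0_nn: "0 \<le> d0 x y" if "x \<in> X" "y \<in> X" for x y
    unfolding d0_def by (rule cINF_greatest[OF ne[OF that]]) (auto simp: chw_nonneg)
  have d0_1: "d0 x y \<le> 1" if "x \<in> X" "y \<in> X" for x y
    using d0_single[of y x 0] that Sb[of x y] by (auto simp: r0)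
  have d0_0: "d0 x x = 0" if "x \<in> X" for x
    using d0_le[of x "[]" x] d0_nn[OF that that] by simp
  have d0_lt: "\<exists>cs. chv X S r x cs y \<and> chw cs < t" if "x \<in> X" "y \<in> X" "d0 x y < t" for x y t
    using that(3) unfolding d0_def by (subst (asm) cINF_less_iff[OF ne[OF that(1,2)] bdd]) auto
  have d0_tri: "d0 x z \<le> d0 x y + d0 y z" if xyz: "x \<in> X" "y \<in> X" "z \<in> X" for x y z
  proof (rule field_le_epsilon)
    fix e :: real assume "e > 0"
    obtain c1 where c1: "chv X S r x c1 y" "chw c1 < d0 x y + e/2"
      using d0_lt[of x y "d0 x y + e/2"] xyz \<open>e>0\<close> by auto
    obtain c2 where c2: "chv X S r y c2 z" "chw c2 < d0 y z + e/2"
      using d0_lt[of y z "d0 y z + e/2"] xyz \<open>e>0\<close> by auto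
    have "chv X S r x (c1 @ c2) z" using c1 c2 by (auto simp: chv_append)
    then have "d0 x z \<le> chw c1 + chw c2" using d0_le by fastforce
    then show "d0 x z \<le> d0 x y + d0 y z + e" using c1 c2 by simp
  qed
  define d where "d x y = (d0 x y + d0 y x) / 2" for x y
  have "\<forall>\<epsilon>>0. \<exists>\<delta>>0. \<forall>x\<in>X. \<forall>y\<in>X. R x y \<le> \<delta> \<longrightarrow> d x y \<le> \<epsilon>"
  proof (intro allI impI)
    fix \<epsilon> :: real assume "\<epsilon> > 0"
    have "\<exists>n. (1/2::real)^n < \<epsilon>" by (rule real_arch_pow_inv) (use \<open>\<epsilon>>0\<close> in simp_all)
    then obtain n where n: "(1/2::real)^n < \<epsilon>" by blast
    obtain \<delta>s where ds: "\<delta>s > 0" "\<forall>x\<in>X. \<forall>y\<in>X. R x y \<le> \<delta>s \<longrightarrow> R y x \<le> r n"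
      using ER_sym[OF ER rpos[of n]] by blast
    show "\<exists>\<delta>>0. \<forall>x\<in>X. \<forall>y\<in>X. R x y \<le> \<delta> \<longrightarrow> d x y \<le> \<epsilon>"
    proof (intro exI[of _ "min \<delta>s (r n)"] conjI ballI impI)
      show "0 < min \<delta>s (r n)" using ds rpos by auto
      fix x y assume xy: "x \<in> X" "y \<in> X" "R x y \<le> min \<delta>s (r n)"
      then have "S x y \<le> r n" using ds unfolding S_def by auto
      then have "d0 x y \<le> (1/2)^n" "d0 y x \<le> (1/2)^n" using d0_single xy Ssym by metis+
      then show "d x y \<le> \<epsilon>" using n unfolding d_def by simp
    qed
  qed
  moreover have "\<forall>\<epsilon>>0. \<exists>\<delta>>0. \<forall>x\<in>X. \<forall>y\<in>X. d x y \<le> \<delta> \<longrightarrow> R x y \<le> \<epsilon>"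
  proof (intro allI impI)
    fix \<epsilon> :: real assume "\<epsilon> > 0"
    have "\<exists>m. (1/2::real)^m < \<epsilon>" by (rule real_arch_pow_inv) (use \<open>\<epsilon>>0\<close> in simp_all)
    then obtain m where m: "(1/2::real)^m < \<epsilon>" by blast
    show "\<exists>\<delta>>0. \<forall>x\<in>X. \<forall>y\<in>X. d x y \<le> \<delta> \<longrightarrow> R x y \<le> \<epsilon>"
    proof (intro exI[of _ "(1/2)^m / 4"] conjI ballI impI)
      show "0 < (1/2::real)^m / 4" by simp
      fix x y assume xy: "x \<in> X" "y \<in> X" "d x y \<le> (1/2)^m / 4"
      then have "d0 x y \<le> (1/2)^m / 2" using d0_nn[of y x] unfolding d_def by simp
      moreover have "(0::real) < (1/2)^m" by simp
      ultimately have "d0 x y < (1/2)^m" by linarith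
      then obtain cs where "chv X S r x cs y" "chw cs < (1/2)^m" using d0_lt xy by blast
      then have "S x y \<le> r m" using key xy by blast
      then show "R x y \<le> \<epsilon>" using rle[of m] m unfolding S_def by simp
    qed
  qed
  moreover have "\<forall>x\<in>X. \<forall>y\<in>X. \<forall>z\<in>X. d x z \<le> d x y + d y z"
  proof (intro ballI)
    fix x y z assume "x \<in> X" "y \<in> X" "z \<in> X"
    then have "d0 x z \<le> d0 x y + d0 y z" "d0 z x \<le> d0 z y + d0 y x" using d0_tri by auto
    then show "d x z \<le> d x y + d y z" unfolding d_def by (simp add: field_simps)
  qed
  moreover have "\<forall>x\<in>X. d x x = 0" by (simp add: d_def d0_0)
  moreover have "\<forall>x\<in>X. \<forall>y\<in>X. d x y = d y x" by (simp add: d_def add.commute)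
  moreover have "\<forall>x\<in>X. \<forall>y\<in>X. 0 \<le> d x y \<and> d x y \<le> 1"
  proof (intro ballI)
    fix x y assume "x \<in> X" "y \<in> X"
    then have "0 \<le> d0 x y" "0 \<le> d0 y x" "d0 x y \<le> 1" "d0 y x \<le> 1" using d0_nn d0_1 by auto
    then show "0 \<le> d x y \<and> d x y \<le> 1" by (simp add: d_def field_simps)
  qed
  ultimately show ?thesis
    by (intro exI[of _ d]) blast
qed


lemma transport_metric:
  assumes MS: "Metric_space C \<rho>" and MC: "Metric_space.mcomplete C \<rho>" and inj: "inj_on h C"
  shows "Metric_space (h ` C) (\<lambda>a b. \<rho> (inv_into C h a) (inv_into C h b))
       \<and> Metric_space.mcomplete (h ` C) (\<lambda>a b. \<rho> (inv_into C h a) (inv_into C h b))"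
proof -
  interpret M: Metric_space C \<rho> by (rule MS)
  define e where "e = (\<lambda>a b. \<rho> (inv_into C h a) (inv_into C h b))"
  have ii: "inv_into C h (h p) = p" if "p \<in> C" for p using inv_into_f_f[OF inj that] .
  have iC: "inv_into C h a \<in> C" if "a \<in> h ` C" for a using that by (auto simp: ii)
  interpret E: Metric_space "h ` C" e
  proof
    show "0 \<le> e x y" for x y by (simp add: e_def M.nonneg)
    show "e x y = e y x" for x y by (simp add: e_def M.commute)
    show "(e x y = 0) = (x = y)" if "x \<in> h ` C" "y \<in> h ` C" for x y
      using that by (auto simp: e_def ii M.zero)
    show "e x z \<le> e x y + e y z" if "x \<in> h ` C" "y \<in> h ` C" "z \<in> h ` C" for x y z
      using that iC by (simp add: e_def M.triangle)
  qed
  have "E.mcomplete"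
    unfolding E.mcomplete_def
  proof (intro allI impI)
    fix \<sigma> assume s: "E.MCauchy \<sigma>"
    define \<tau> where "\<tau> n = inv_into C h (\<sigma> n)" for n
    have sC: "\<sigma> n \<in> h ` C" for n using s by (auto simp: E.MCauchy_def)
    have sc: "\<forall>\<epsilon>>0. \<exists>N. \<forall>n n'. N \<le> n \<longrightarrow> N \<le> n' \<longrightarrow> e (\<sigma> n) (\<sigma> n') < \<epsilon>"
      using s unfolding E.MCauchy_def by blast
    have "M.MCauchy \<tau>"
      unfolding M.MCauchy_def
    proof (intro conjI)
      show "range \<tau> \<subseteq> C" using iC sC by (auto simp: \<tau>_def)
      show "\<forall>\<epsilon>>0. \<exists>N. \<forall>n n'. N \<le> n \<longrightarrow> N \<le> n' \<longrightarrow> \<rho> (\<tau> n) (\<tau> n') < \<epsilon>"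
        using sc by (simp add: \<tau>_def e_def)
    qed
    then obtain p where "limitin M.mtopology \<tau> p sequentially"
      using MC unfolding M.mcomplete_def by blast
    then have p: "p \<in> C" "\<forall>\<epsilon>>0. \<exists>N. \<forall>n\<ge>N. \<tau> n \<in> C \<and> \<rho> (\<tau> n) p < \<epsilon>"
      unfolding M.limit_metric_sequentially by auto
    have "\<forall>\<epsilon>>0. \<exists>N. \<forall>n\<ge>N. \<sigma> n \<in> h ` C \<and> e (\<sigma> n) (h p) < \<epsilon>"
    proof (intro allI impI)
      fix \<epsilon> :: real assume "\<epsilon> > 0"
      then obtain N where "\<forall>n\<ge>N. \<tau> n \<in> C \<and> \<rho> (\<tau> n) p < \<epsilon>" using p(2) by blast
      then show "\<exists>N. \<forall>n\<ge>N. \<sigma> n \<in> h ` C \<and> e (\<sigma> n) (h p) < \<epsilon>"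
        using sC by (auto simp: e_def ii[OF p(1)] \<tau>_def)
    qed
    then have "limitin E.mtopology \<sigma> (h p) sequentially"
      unfolding E.limit_metric_sequentially using p(1) by auto
    then show "\<exists>x. limitin E.mtopology \<sigma> x sequentially" by blast
  qed
  then show ?thesis using E.Metric_space_axioms unfolding e_def by blast
qed

lemma completion_exists:
  fixes X :: "'u set" and d :: "'u \<Rightarrow> 'u \<Rightarrow> real" and enc :: "(nat \<Rightarrow> 'u) \<Rightarrow> 'u"
  assumes enc: "inj enc"
    and d0: "\<forall>x\<in>X. d x x = 0" and dsym: "\<forall>x\<in>X. \<forall>y\<in>X. d x y = d y x"
    and dtri: "\<forall>x\<in>X. \<forall>y\<in>X. \<forall>z\<in>X. d x z \<le> d x y + d y z"
    and db: "\<forall>x\<in>X. \<forall>y\<in>X. 0 \<le> d x y \<and> d x y \<le> 1"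
  shows "\<exists>(Y::'u set) e \<iota>. cMet1_obj Y e \<and> (\<forall>x\<in>X. \<iota> x \<in> Y)
     \<and> (\<forall>x\<in>X. \<forall>x'\<in>X. e (\<iota> x) (\<iota> x') = d x x')
     \<and> (\<forall>y\<in>Y. \<forall>\<epsilon>>0. \<exists>x\<in>X. e y (\<iota> x) < \<epsilon>)"
proof -
  define FS :: "('u \<Rightarrow> real) set" where "FS = Met_TC.fspace X"
  define FD :: "('u \<Rightarrow> real) \<Rightarrow> ('u \<Rightarrow> real) \<Rightarrow> real" where "FD = Met_TC.fdist X"
  interpret F: Metric_space FS FD
    unfolding FS_def FD_def by (rule Met_TC.Metric_space_funspace)
  have Fcomp: "F.mcomplete"
  proof -
    have "Met_TC.mcomplete TYPE(real)" by (simp add: complete_UNIV)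
    then have "mcomplete_of (funspace X (Met_TC.Self :: real metric))" by (rule Met_TC.mcomplete_funspace)
    then show ?thesis
      by (simp add: funspace_def Met_TC.Self_def mcomplete_of_def FS_def FD_def
           Metric_space.mspace_metric Metric_space.mdist_metric Met_TC.Metric_space_funspace)
  qed
  define \<Phi> where "\<Phi> x = restrict (\<lambda>z. d x z) X" for x
  have PhiFS: "\<Phi> x \<in> FS" if "x \<in> X" for x
  proof -
    have "\<Phi> x ` X \<subseteq> {0..1}" using db that by (auto simp: \<Phi>_def)
    then have "bounded (\<Phi> x ` X)" by (rule bounded_subset[OF bounded_closed_interval])
    then show ?thesis by (simp add: FS_def Met_TC.fspace_def \<Phi>_def)
  qed
  have PhiD: "FD (\<Phi> x) (\<Phi> y) = d x y" if "x \<in> X" "y \<in> X" for x y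
  proof -
    have "FD (\<Phi> x) (\<Phi> y) = Sup ((\<lambda>z. dist (\<Phi> x z) (\<Phi> y z)) ` X)"
      using PhiFS that by (auto simp: FD_def FS_def Met_TC.fdist_def)
    also have "\<dots> = d x y"
    proof (rule cSup_eq_maximum)
      show "d x y \<in> (\<lambda>z. dist (\<Phi> x z) (\<Phi> y z)) ` X"
      proof (rule image_eqI[where x=y])
        show "d x y = dist (\<Phi> x y) (\<Phi> y y)" using that d0 db by (simp add: \<Phi>_def dist_real_def)
        show "y \<in> X" by fact
      qed
      show "t \<le> d x y" if "t \<in> (\<lambda>z. dist (\<Phi> x z) (\<Phi> y z)) ` X" for t
      proof -
        obtain z where z: "z \<in> X" "t = dist (\<Phi> x z) (\<Phi> y z)" using \<open>t \<in> _\<close> by auto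
        have "d x z \<le> d x y + d y z" "d y z \<le> d y x + d x z" using dtri z \<open>x\<in>X\<close> \<open>y\<in>X\<close> by auto
        then show ?thesis using z dsym \<open>x\<in>X\<close> \<open>y\<in>X\<close> by (auto simp: \<Phi>_def dist_real_def)
      qed
    qed
    finally show ?thesis .
  qed
  define C where "C = F.mtopology closure_of (\<Phi> ` X)"
  have CFS: "C \<subseteq> FS" unfolding C_def using closure_of_subset_topspace[of F.mtopology "\<Phi> ` X"] by simp
  have PhiC: "\<Phi> x \<in> C" if "x \<in> X" for x
  proof -
    have "\<Phi> ` X \<subseteq> F.mtopology closure_of (\<Phi> ` X)"
      by (rule closure_of_subset) (use PhiFS in auto)
    then show ?thesis using that by (auto simp: C_def)
  qed
  have dense: "\<exists>x\<in>X. FD p (\<Phi> x) < r" if "p \<in> C" "r > 0" for p r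
    using that unfolding C_def F.metric_closure_of by auto
  interpret Sub: Submetric FS FD C by (unfold_locales) (rule CFS)
  have Ccomp: "Metric_space.mcomplete C FD"
    using Sub.closedin_mcomplete_imp_mcomplete[OF _ Fcomp] unfolding C_def by (simp add: closedin_closure_of)
  have CMS: "Metric_space C FD" by (rule Sub.sub.Metric_space_axioms)
  have Cle1: "FD p q \<le> 1" if "p \<in> C" "q \<in> C" for p q
  proof (rule field_le_epsilon)
    fix t :: real assume "t > 0"
    obtain x where x: "x \<in> X" "FD p (\<Phi> x) < t/2" using dense[OF \<open>p\<in>C\<close>, of "t/2"] \<open>t>0\<close> by auto
    obtain y where y: "y \<in> X" "FD q (\<Phi> y) < t/2" using dense[OF \<open>q\<in>C\<close>, of "t/2"] \<open>t>0\<close> by auto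
    have pF: "p \<in> FS" "q \<in> FS" using CFS that by auto
    have xF: "\<Phi> x \<in> FS" "\<Phi> y \<in> FS" using PhiFS x(1) y(1) by auto
    have t1: "FD p q \<le> FD p (\<Phi> x) + FD (\<Phi> x) q" by (rule F.triangle) (use pF xF in auto)
    have t2: "FD (\<Phi> x) q \<le> FD (\<Phi> x) (\<Phi> y) + FD (\<Phi> y) q" by (rule F.triangle) (use pF xF in auto)
    have t3: "FD (\<Phi> x) (\<Phi> y) \<le> 1" using PhiD[OF x(1) y(1)] db x(1) y(1) by auto
    have t4: "FD (\<Phi> y) q = FD q (\<Phi> y)" by (rule F.commute)
    from t1 t2 t3 t4 x(2) y(2) show "FD p q \<le> 1 + t" by argo
  qed
  define sel where "sel p = (SOME s. \<forall>n. s n \<in> X \<and> FD p (\<Phi> (s n)) < 1 / Suc n)" for p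
  define code where "code p = enc (sel p)" for p
  have code_ex: "\<forall>n. sel p n \<in> X \<and> FD p (\<Phi> (sel p n)) < 1 / Suc n" if "p \<in> C" for p
  proof -
    have "\<forall>n. \<exists>x. x \<in> X \<and> FD p (\<Phi> x) < 1 / Suc n"
    proof
      fix n
      have "(0::real) < 1 / Suc n" by simp
      then show "\<exists>x. x \<in> X \<and> FD p (\<Phi> x) < 1 / Suc n" using dense[OF that] by blast
    qed
    then have "\<exists>s. \<forall>n. s n \<in> X \<and> FD p (\<Phi> (s n)) < 1 / Suc n" by (rule choice)
    then show ?thesis unfolding sel_def by (rule someI_ex)
  qed
  have inj: "inj_on code C"
  proof (rule inj_onI)
    fix p q assume pq: "p \<in> C" "q \<in> C" "code p = code q"
    have "enc (sel p) = enc (sel q)" using pq(3) unfolding code_def .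
    then have sq: "sel p = sel q" by (rule injD[OF enc])
    have sp: "\<forall>n. sel p n \<in> X \<and> FD p (\<Phi> (sel p n)) < 1 / Suc n" using code_ex[OF pq(1)] .
    have sq2: "\<forall>n. sel p n \<in> X \<and> FD q (\<Phi> (sel p n)) < 1 / Suc n" using code_ex[OF pq(2)] unfolding sq .
    have pF: "p \<in> FS" "q \<in> FS" using CFS pq by auto
    have "FD p q \<le> 0"
    proof (rule field_le_epsilon)
      fix t :: real assume "t > 0"
      from reals_Archimedean[OF half_gt_zero[OF \<open>t>0\<close>]]
      obtain n where n: "inverse (of_nat (Suc n)) < t/2" by blast
      then have n: "1 / Suc n < t/2" by (simp add: inverse_eq_divide)
      have snX: "sel p n \<in> X" and sn1: "FD p (\<Phi> (sel p n)) < 1 / Suc n" and sn2: "FD q (\<Phi> (sel p n)) < 1 / Suc n"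
        using sp sq2 by auto
      have t1: "FD p q \<le> FD p (\<Phi> (sel p n)) + FD (\<Phi> (sel p n)) q"
        by (rule F.triangle) (use pF PhiFS[OF snX] in auto)
      have t4: "FD (\<Phi> (sel p n)) q = FD q (\<Phi> (sel p n))" by (rule F.commute)
      from t1 t4 sn1 sn2 n have "FD p q < t" by linarith
      then show "FD p q \<le> 0 + t" by simp
    qed
    then have "FD p q = 0" using F.nonneg[of p q] by simp
    then show "p = q" using F.zero[OF pF] by simp
  qed
  define Y where "Y = code ` C"
  define e where "e = (\<lambda>a b. FD (inv_into C code a) (inv_into C code b))"
  have ii: "inv_into C code (code p) = p" if "p \<in> C" for p using inv_into_f_f[OF inj that] .
  have Ym: "Metric_space Y e" "Metric_space.mcomplete Y e"
    using transport_metric[OF CMS Ccomp inj] unfolding Y_def e_def by auto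
  have "cMet1_obj Y e"
    unfolding cMet1_obj_def using Ym Cle1 by (auto simp: Y_def e_def ii)
  moreover have "\<forall>x\<in>X. code (\<Phi> x) \<in> Y" using PhiC by (auto simp: Y_def)
  moreover have "\<forall>x\<in>X. \<forall>x'\<in>X. e (code (\<Phi> x)) (code (\<Phi> x')) = d x x'"
    using PhiC PhiD by (simp add: e_def ii)
  moreover have "\<forall>y\<in>Y. \<forall>\<epsilon>>0. \<exists>x\<in>X. e y (code (\<Phi> x)) < \<epsilon>"
    using dense PhiC by (auto simp: Y_def e_def ii)
  ultimately show ?thesis by (intro exI[of _ Y] exI[of _ e] exI[of _ "\<lambda>x. code (\<Phi> x)"]) simp
qed


lemma func_relI:
  assumes b: "\<forall>x\<in>X. \<forall>y\<in>Y. 0 \<le> F x y \<and> F x y \<le> 1"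
    and c2: "\<And>\<epsilon>. \<epsilon>>0 \<Longrightarrow> \<exists>\<delta>>0. \<forall>x\<in>X. \<forall>x'\<in>X. \<forall>y\<in>Y. \<forall>y'\<in>Y. F x y \<le> \<delta> \<and> R x x' \<le> \<delta> \<and> S y y' \<le> \<delta> \<longrightarrow> F x' y' \<le> \<epsilon>"
    and c3: "\<And>\<epsilon>. \<epsilon>>0 \<Longrightarrow> \<exists>\<delta>>0. \<forall>x\<in>X. \<forall>y\<in>Y. \<forall>y'\<in>Y. F x y \<le> \<delta> \<and> F x y' \<le> \<delta> \<longrightarrow> S y y' \<le> \<epsilon>"
    and c4: "\<forall>x\<in>X. \<forall>\<epsilon>>0. \<exists>y\<in>Y. F x y < \<epsilon>"
  shows "func_rel X R Y S F"
  unfolding func_rel_def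
proof (intro conjI)
  show "\<forall>x\<in>X. \<forall>y\<in>Y. 0 \<le> F x y \<and> F x y \<le> 1" by (rule b)
  show "\<forall>x\<in>X. \<forall>\<epsilon>>0. \<exists>y\<in>Y. F x y < \<epsilon>" by (rule c4)
  show "sqle (X \<times> X \<times> Y \<times> Y) (\<lambda>(x,x',y,y'). max (F x y) (max (R x x') (S y y'))) (\<lambda>(x,x',y,y'). F x' y')"
    unfolding sqle_def
  proof (intro allI impI)
    fix \<epsilon> :: real assume "\<epsilon> > 0"
    then obtain \<delta> where "\<delta>>0" "\<forall>x\<in>X. \<forall>x'\<in>X. \<forall>y\<in>Y. \<forall>y'\<in>Y. F x y \<le> \<delta> \<and> R x x' \<le> \<delta> \<and> S y y' \<le> \<delta> \<longrightarrow> F x' y' \<le> \<epsilon>"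
      using c2 by blast
    then show "\<exists>\<delta>>0. \<forall>z\<in>X \<times> X \<times> Y \<times> Y. (\<lambda>(x,x',y,y'). max (F x y) (max (R x x') (S y y'))) z \<le> \<delta> \<longrightarrow> (\<lambda>(x,x',y,y'). F x' y') z \<le> \<epsilon>"
      by (intro exI[of _ \<delta>]) auto
  qed
  show "sqle (X \<times> Y \<times> Y) (\<lambda>(x,y,y'). max (F x y) (F x y')) (\<lambda>(x,y,y'). S y y')"
    unfolding sqle_def
  proof (intro allI impI)
    fix \<epsilon> :: real assume "\<epsilon> > 0"
    then obtain \<delta> where "\<delta>>0" "\<forall>x\<in>X. \<forall>y\<in>Y. \<forall>y'\<in>Y. F x y \<le> \<delta> \<and> F x y' \<le> \<delta> \<longrightarrow> S y y' \<le> \<epsilon>"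
      using c3 by blast
    then show "\<exists>\<delta>>0. \<forall>z\<in>X \<times> Y \<times> Y. (\<lambda>(x,y,y'). max (F x y) (F x y')) z \<le> \<delta> \<longrightarrow> (\<lambda>(x,y,y'). S y y') z \<le> \<epsilon>"
      by (intro exI[of _ \<delta>]) auto
  qed
qed

lemma func_relD:
  assumes "func_rel X R Y S F"
  shows "\<forall>x\<in>X. \<forall>y\<in>Y. 0 \<le> F x y \<and> F x y \<le> 1"
    and "\<And>\<epsilon>. \<epsilon>>0 \<Longrightarrow> \<exists>\<delta>>0. \<forall>x\<in>X. \<forall>x'\<in>X. \<forall>y\<in>Y. \<forall>y'\<in>Y. F x y \<le> \<delta> \<and> R x x' \<le> \<delta> \<and> S y y' \<le> \<delta> \<longrightarrow> F x' y' \<le> \<epsilon>"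
    and "\<And>\<epsilon>. \<epsilon>>0 \<Longrightarrow> \<exists>\<delta>>0. \<forall>x\<in>X. \<forall>y\<in>Y. \<forall>y'\<in>Y. F x y \<le> \<delta> \<and> F x y' \<le> \<delta> \<longrightarrow> S y y' \<le> \<epsilon>"
    and "\<forall>x\<in>X. \<forall>\<epsilon>>0. \<exists>y\<in>Y. F x y < \<epsilon>"
proof -
  show "\<forall>x\<in>X. \<forall>y\<in>Y. 0 \<le> F x y \<and> F x y \<le> 1" "\<forall>x\<in>X. \<forall>\<epsilon>>0. \<exists>y\<in>Y. F x y < \<epsilon>"
    using assms by (auto simp: func_rel_def)
  fix \<epsilon> :: real assume "\<epsilon> > 0"
  obtain \<delta> where "\<delta>>0" "\<forall>z\<in>X \<times> X \<times> Y \<times> Y. (\<lambda>(x,x',y,y'). max (F x y) (max (R x x') (S y y'))) z \<le> \<delta> \<longrightarrow> (\<lambda>(x,x',y,y'). F x' y') z \<le> \<epsilon>"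
    using assms \<open>\<epsilon>>0\<close> unfolding func_rel_def sqle_def by blast
  then show "\<exists>\<delta>>0. \<forall>x\<in>X. \<forall>x'\<in>X. \<forall>y\<in>Y. \<forall>y'\<in>Y. F x y \<le> \<delta> \<and> R x x' \<le> \<delta> \<and> S y y' \<le> \<delta> \<longrightarrow> F x' y' \<le> \<epsilon>"
    by (intro exI[of _ \<delta>]) auto
next
  fix \<epsilon> :: real assume "\<epsilon> > 0"
  obtain \<delta> where "\<delta>>0" "\<forall>z\<in>X \<times> Y \<times> Y. (\<lambda>(x,y,y'). max (F x y) (F x y')) z \<le> \<delta> \<longrightarrow> (\<lambda>(x,y,y'). S y y') z \<le> \<epsilon>"
    using assms \<open>\<epsilon>>0\<close> unfolding func_rel_def sqle_def by blast
  then show "\<exists>\<delta>>0. \<forall>x\<in>X. \<forall>y\<in>Y. \<forall>y'\<in>Y. F x y \<le> \<delta> \<and> F x y' \<le> \<delta> \<longrightarrow> S y y' \<le> \<epsilon>"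
    by (intro exI[of _ \<delta>]) auto
qed

lemma ER_eqI:
  assumes "\<And>\<epsilon>. \<epsilon>>0 \<Longrightarrow> \<exists>\<delta>>0. \<forall>x\<in>X. \<forall>y\<in>Y. F x y \<le> \<delta> \<longrightarrow> F' x y \<le> \<epsilon>"
  shows "ER_eq X Y F F'"
  unfolding ER_eq_def sqle_def
proof (intro allI impI)
  fix \<epsilon> :: real assume "\<epsilon> > 0"
  then obtain \<delta> where "\<delta>>0" "\<forall>x\<in>X. \<forall>y\<in>Y. F x y \<le> \<delta> \<longrightarrow> F' x y \<le> \<epsilon>" using assms by blast
  then show "\<exists>\<delta>>0. \<forall>z\<in>X \<times> Y. (\<lambda>(x,y). F x y) z \<le> \<delta> \<longrightarrow> (\<lambda>(x,y). F' x y) z \<le> \<epsilon>"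
    by (intro exI[of _ \<delta>]) auto
qed

lemma ER_eqD:
  assumes "ER_eq X Y F F'" "\<epsilon>>0"
  shows "\<exists>\<delta>>0. \<forall>x\<in>X. \<forall>y\<in>Y. F x y \<le> \<delta> \<longrightarrow> F' x y \<le> \<epsilon>"
proof -
  obtain \<delta> where "\<delta>>0" "\<forall>z\<in>X \<times> Y. (\<lambda>(x,y). F x y) z \<le> \<delta> \<longrightarrow> (\<lambda>(x,y). F' x y) z \<le> \<epsilon>"
    using assms unfolding ER_eq_def sqle_def by blast
  then show ?thesis by (intro exI[of _ \<delta>]) auto
qed

lemma ER_objI:
  assumes "\<forall>x\<in>X. \<forall>y\<in>X. 0 \<le> R x y \<and> R x y \<le> 1" "\<forall>x\<in>X. R x x = 0"
    and c2: "\<And>\<epsilon>. \<epsilon>>0 \<Longrightarrow> \<exists>\<delta>>0. \<forall>x\<in>X. \<forall>y\<in>X. R x y \<le> \<delta> \<longrightarrow> R y x \<le> \<epsilon>"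
    and c3: "\<And>\<epsilon>. \<epsilon>>0 \<Longrightarrow> \<exists>\<delta>>0. \<forall>x\<in>X. \<forall>y\<in>X. \<forall>z\<in>X. R x y \<le> \<delta> \<and> R y z \<le> \<delta> \<longrightarrow> R x z \<le> \<epsilon>"
  shows "ER_obj X R"
  unfolding ER_obj_def
proof (intro conjI)
  show "\<forall>x\<in>X. \<forall>y\<in>X. 0 \<le> R x y \<and> R x y \<le> 1" "\<forall>x\<in>X. R x x = 0" by fact+
  show "sqle (X \<times> X) (\<lambda>(x,y). R x y) (\<lambda>(x,y). R y x)"
    unfolding sqle_def
  proof (intro allI impI)
    fix \<epsilon> :: real assume "\<epsilon> > 0"
    then obtain \<delta> where "\<delta>>0" "\<forall>x\<in>X. \<forall>y\<in>X. R x y \<le> \<delta> \<longrightarrow> R y x \<le> \<epsilon>" using c2 by blast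
    then show "\<exists>\<delta>>0. \<forall>z\<in>X \<times> X. (\<lambda>(x,y). R x y) z \<le> \<delta> \<longrightarrow> (\<lambda>(x,y). R y x) z \<le> \<epsilon>"
      by (intro exI[of _ \<delta>]) auto
  qed
  show "sqle (X \<times> X \<times> X) (\<lambda>(x,y,z). max (R x y) (R y z)) (\<lambda>(x,y,z). R x z)"
    unfolding sqle_def
  proof (intro allI impI)
    fix \<epsilon> :: real assume "\<epsilon> > 0"
    then obtain \<delta> where "\<delta>>0" "\<forall>x\<in>X. \<forall>y\<in>X. \<forall>z\<in>X. R x y \<le> \<delta> \<and> R y z \<le> \<delta> \<longrightarrow> R x z \<le> \<epsilon>" using c3 by blast
    then show "\<exists>\<delta>>0. \<forall>w\<in>X \<times> X \<times> X. (\<lambda>(x,y,z). max (R x y) (R y z)) w \<le> \<delta> \<longrightarrow> (\<lambda>(x,y,z). R x z) w \<le> \<epsilon>"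
      by (intro exI[of _ \<delta>]) auto
  qed
qed

lemma cMet1_hom_iff:
  assumes "cMet1_obj X d" "cMet1_obj Y e"
  shows "cMet1_hom X d Y e f \<longleftrightarrow> (\<forall>x\<in>X. f x \<in> Y) \<and>
     (\<forall>\<epsilon>>0. \<exists>\<delta>>0. \<forall>x\<in>X. \<forall>y\<in>X. d y x < \<delta> \<longrightarrow> e (f y) (f x) < \<epsilon>)"
proof -
  have "Metric_space X d" "Metric_space Y e" using assms by (auto simp: cMet1_obj_def)
  then show ?thesis
    unfolding cMet1_hom_def uniformly_continuous_map_def
    by (simp add: Metric_space.mspace_metric Metric_space.mdist_metric Pi_iff)
qed

lemma functor_part:
  fixes u :: "'u itself"
  shows "G_is_functor u"
  unfolding G_is_functor_def
proof (intro conjI allI impI)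
  fix X :: "'u set" and d assume X: "cMet1_obj X d"
  then interpret M: Metric_space X d by (simp add: cMet1_obj_def)
  show "ER_obj X d"
  proof (rule ER_objI)
    show "\<forall>x\<in>X. \<forall>y\<in>X. 0 \<le> d x y \<and> d x y \<le> 1" using X M.nonneg by (auto simp: cMet1_obj_def)
    show "\<forall>x\<in>X. d x x = 0" by simp
    show "\<exists>\<delta>>0. \<forall>x\<in>X. \<forall>y\<in>X. d x y \<le> \<delta> \<longrightarrow> d y x \<le> \<epsilon>" if "\<epsilon>>0" for \<epsilon>
      using that by (intro exI[of _ \<epsilon>]) (auto simp: M.commute)
    show "\<exists>\<delta>>0. \<forall>x\<in>X. \<forall>y\<in>X. \<forall>z\<in>X. d x y \<le> \<delta> \<and> d y z \<le> \<delta> \<longrightarrow> d x z \<le> \<epsilon>" if "\<epsilon>>0" for \<epsilon>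
    proof (intro exI[of _ "\<epsilon>/2"] conjI ballI impI)
      show "0 < \<epsilon>/2" using that by simp
      fix x y z assume h: "x \<in> X" "y \<in> X" "z \<in> X" "d x y \<le> \<epsilon>/2 \<and> d y z \<le> \<epsilon>/2"
      have "d x z \<le> d x y + d y z" using h(1,2,3) by (rule M.triangle)
      then show "d x z \<le> \<epsilon>" using h(4) by linarith
    qed
  qed
next
  fix X :: "'u set" and d Y e f assume X: "cMet1_obj X d" and Y: "cMet1_obj Y e" and f: "cMet1_hom X d Y e f"
  interpret M: Metric_space X d using X by (simp add: cMet1_obj_def)
  interpret N: Metric_space Y e using Y by (simp add: cMet1_obj_def)
  have fY: "\<forall>x\<in>X. f x \<in> Y" and fu: "\<forall>\<epsilon>>0. \<exists>\<delta>>0. \<forall>x\<in>X. \<forall>y\<in>X. d y x < \<delta> \<longrightarrow> e (f y) (f x) < \<epsilon>"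
    using f cMet1_hom_iff[OF X Y] by auto
  show "func_rel X d Y e (G_hom e f)"
  proof (rule func_relI)
    show "\<forall>x\<in>X. \<forall>y\<in>Y. 0 \<le> G_hom e f x y \<and> G_hom e f x y \<le> 1"
      using Y fY N.nonneg by (auto simp: cMet1_obj_def G_hom_def)
    show "\<forall>x\<in>X. \<forall>\<epsilon>>0. \<exists>y\<in>Y. G_hom e f x y < \<epsilon>"
    proof (intro ballI allI impI)
      fix x and \<epsilon> :: real assume "x \<in> X" "\<epsilon> > 0"
      then show "\<exists>y\<in>Y. G_hom e f x y < \<epsilon>" using fY by (intro bexI[of _ "f x"]) (auto simp: G_hom_def)
    qed
  next
    fix \<epsilon> :: real assume "\<epsilon> > 0"
    then obtain \<delta>u where du: "\<delta>u > 0" "\<forall>x\<in>X. \<forall>y\<in>X. d y x < \<delta>u \<longrightarrow> e (f y) (f x) < \<epsilon>/3"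
      using fu[rule_format, of "\<epsilon>/3"] by auto
    show "\<exists>\<delta>>0. \<forall>x\<in>X. \<forall>x'\<in>X. \<forall>y\<in>Y. \<forall>y'\<in>Y. G_hom e f x y \<le> \<delta> \<and> d x x' \<le> \<delta> \<and> e y y' \<le> \<delta> \<longrightarrow> G_hom e f x' y' \<le> \<epsilon>"
    proof (intro exI[of _ "min (\<epsilon>/3) (\<delta>u/2)"] conjI ballI impI)
      show "0 < min (\<epsilon>/3) (\<delta>u/2)" using \<open>\<epsilon>>0\<close> du by simp
      fix x x' y y' assume h: "x \<in> X" "x' \<in> X" "y \<in> Y" "y' \<in> Y"
        "G_hom e f x y \<le> min (\<epsilon>/3) (\<delta>u/2) \<and> d x x' \<le> min (\<epsilon>/3) (\<delta>u/2) \<and> e y y' \<le> min (\<epsilon>/3) (\<delta>u/2)"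
      have "d x' x < \<delta>u" using h du M.commute[of x x'] by auto
      then have "e (f x') (f x) < \<epsilon>/3" using du h by blast
      moreover have "e (f x') y' \<le> e (f x') (f x) + e (f x) y'" using fY h by (intro N.triangle) auto
      moreover have "e (f x) y' \<le> e (f x) y + e y y'" using fY h by (intro N.triangle) auto
      ultimately show "G_hom e f x' y' \<le> \<epsilon>" using h by (auto simp: G_hom_def)
    qed
  next
    fix \<epsilon> :: real assume "\<epsilon> > 0"
    show "\<exists>\<delta>>0. \<forall>x\<in>X. \<forall>y\<in>Y. \<forall>y'\<in>Y. G_hom e f x y \<le> \<delta> \<and> G_hom e f x y' \<le> \<delta> \<longrightarrow> e y y' \<le> \<epsilon>"
    proof (intro exI[of _ "\<epsilon>/2"] conjI ballI impI)
      show "0 < \<epsilon>/2" using \<open>\<epsilon>>0\<close> by simp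
      fix x y y' assume h: "x \<in> X" "y \<in> Y" "y' \<in> Y" "G_hom e f x y \<le> \<epsilon>/2 \<and> G_hom e f x y' \<le> \<epsilon>/2"
      have "e y y' \<le> e y (f x) + e (f x) y'" using N.triangle fY h by blast
      then show "e y y' \<le> \<epsilon>" using h N.commute[of y "f x"] by (auto simp: G_hom_def)
    qed
  qed
next
  fix X :: "'u set" and d assume X: "cMet1_obj X d"
  show "ER_eq X X (G_hom d id) d"
    by (rule ER_eqI) (auto simp: G_hom_def)
next
  fix X :: "'u set" and d Y e Z c f g assume X: "cMet1_obj X d" and Y: "cMet1_obj Y e" and Z: "cMet1_obj Z c"
    and f: "cMet1_hom X d Y e f" and g: "cMet1_hom Y e Z c g"
  interpret N: Metric_space Y e using Y by (simp add: cMet1_obj_def)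
  interpret K: Metric_space Z c using Z by (simp add: cMet1_obj_def)
  have fY: "\<forall>x\<in>X. f x \<in> Y" using f cMet1_hom_iff[OF X Y] by auto
  show "ER_eq X Z (G_hom c (g \<circ> f)) (ER_comp Y (G_hom e f) (G_hom c g))"
  proof (rule ER_eqI)
    fix \<epsilon> :: real assume "\<epsilon> > 0"
    show "\<exists>\<delta>>0. \<forall>x\<in>X. \<forall>z\<in>Z. G_hom c (g \<circ> f) x z \<le> \<delta> \<longrightarrow> ER_comp Y (G_hom e f) (G_hom c g) x z \<le> \<epsilon>"
    proof (intro exI[of _ \<epsilon>] conjI ballI impI)
      show "0 < \<epsilon>" by fact
      fix x z assume h: "x \<in> X" "z \<in> Z" "G_hom c (g \<circ> f) x z \<le> \<epsilon>"
      have "(INF y\<in>Y. max (e (f x) y) (c (g y) z)) \<le> max (e (f x) (f x)) (c (g (f x)) z)"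
        by (rule cINF_lower) (auto intro!: bdd_belowI[of _ 0] simp: fY h le_max_iff_disj N.nonneg)
      then show "ER_comp Y (G_hom e f) (G_hom c g) x z \<le> \<epsilon>"
        using h fY K.nonneg by (auto simp: ER_comp_def G_hom_def)
    qed
  qed
qed


lemma faithful_part:
  fixes u :: "'u itself"
  shows "G_faithful u"
  unfolding G_faithful_def
proof (intro allI impI ballI)
  fix X :: "'u set" and d Y e f g x
  assume X: "cMet1_obj X d" and Y: "cMet1_obj Y e" and f: "cMet1_hom X d Y e f" and g: "cMet1_hom X d Y e g"
    and eq: "ER_eq X Y (G_hom e f) (G_hom e g)" and x: "x \<in> X"
  interpret N: Metric_space Y e using Y by (simp add: cMet1_obj_def)
  have fY: "f x \<in> Y" using f cMet1_hom_iff[OF X Y] x by auto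
  have gY: "g x \<in> Y" using g cMet1_hom_iff[OF X Y] x by auto
  have "e (g x) (f x) \<le> 0"
  proof (rule field_le_epsilon)
    fix t :: real assume "t > 0"
    obtain \<delta> where "\<delta> > 0" "\<forall>x\<in>X. \<forall>y\<in>Y. G_hom e f x y \<le> \<delta> \<longrightarrow> G_hom e g x y \<le> t"
      using ER_eqD[OF eq \<open>t>0\<close>] by blast
    then have "G_hom e g x (f x) \<le> t" using x fY by (auto simp: G_hom_def)
    then show "e (g x) (f x) \<le> 0 + t" by (simp add: G_hom_def)
  qed
  then show "f x = g x" using N.zero[OF gY fY] N.nonneg[of "g x" "f x"] by auto
qed

lemma full_part:
  fixes u :: "'u itself"
  shows "G_full u"
  unfolding G_full_def
proof (intro allI impI)
  fix X :: "'u set" and d Y e F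
  assume X: "cMet1_obj X d" and Y: "cMet1_obj Y e" and F: "func_rel X d Y e F"
  interpret M: Metric_space X d using X by (simp add: cMet1_obj_def)
  interpret N: Metric_space Y e using Y by (simp add: cMet1_obj_def)
  have Ncomp: "N.mcomplete" using Y by (simp add: cMet1_obj_def)
  note F2 = func_relD(2)[OF F] and F3 = func_relD(3)[OF F] and F4 = func_relD(4)[OF F]
  have arch: "\<exists>N. \<forall>n\<ge>N. 1 / real (Suc n) < t" if tpos: "t > 0" for t :: real
  proof -
    from reals_Archimedean[OF tpos] obtain N where "inverse (of_nat (Suc N)) < t" by blast
    then have "1 / real (Suc N) < t" by (simp add: inverse_eq_divide)
    moreover have "1 / real (Suc n) \<le> 1 / real (Suc N)" if "n \<ge> N" for n
      using that by (simp add: frac_le)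
    ultimately show ?thesis by (intro exI[of _ N]) (auto intro: le_less_trans)
  qed
  define s where "s x n = (SOME y. y \<in> Y \<and> F x y < 1 / real (Suc n))" for x n
  have s: "s x n \<in> Y \<and> F x (s x n) < 1 / real (Suc n)" if "x \<in> X" for x n
  proof -
    have "(0::real) < 1 / real (Suc n)" by simp
    then have "\<exists>y. y \<in> Y \<and> F x y < 1 / real (Suc n)" using F4 that by blast
    then show ?thesis unfolding s_def by (rule someI_ex)
  qed
  have cauchy: "N.MCauchy (s x)" if x: "x \<in> X" for x
    unfolding N.MCauchy_def
  proof (intro conjI allI impI)
    show "range (s x) \<subseteq> Y" using s x by auto
    fix \<epsilon> :: real assume "\<epsilon> > 0"
    then obtain \<delta> where d: "\<delta> > 0" "\<forall>x\<in>X. \<forall>y\<in>Y. \<forall>y'\<in>Y. F x y \<le> \<delta> \<and> F x y' \<le> \<delta> \<longrightarrow> e y y' \<le> \<epsilon>/2"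
      using F3[of "\<epsilon>/2"] by auto
    obtain K where K: "\<forall>n\<ge>K. 1 / real (Suc n) < \<delta>" using arch d(1) by blast
    show "\<exists>N. \<forall>n n'. N \<le> n \<longrightarrow> N \<le> n' \<longrightarrow> e (s x n) (s x n') < \<epsilon>"
    proof (intro exI[of _ K] allI impI)
      fix n n' assume "K \<le> n" "K \<le> n'"
      then have "1 / real (Suc n) < \<delta>" "1 / real (Suc n') < \<delta>" using K by auto
      then have "F x (s x n) \<le> \<delta>" "F x (s x n') \<le> \<delta>" using s[OF x, of n] s[OF x, of n'] by linarith+
      then have "e (s x n) (s x n') \<le> \<epsilon>/2" using d s x by blast
      then show "e (s x n) (s x n') < \<epsilon>" using \<open>\<epsilon>>0\<close> by simp
    qed
  qed
  define f where "f x = (SOME l. limitin N.mtopology (s x) l sequentially)" for x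
  have flim: "f x \<in> Y \<and> (\<forall>\<epsilon>>0. \<exists>N. \<forall>n\<ge>N. s x n \<in> Y \<and> e (s x n) (f x) < \<epsilon>)" if x: "x \<in> X" for x
  proof -
    have "\<exists>l. limitin N.mtopology (s x) l sequentially" using Ncomp cauchy[OF x] unfolding N.mcomplete_def by blast
    then have "limitin N.mtopology (s x) (f x) sequentially" unfolding f_def by (rule someI_ex)
    then show ?thesis unfolding N.limit_metric_sequentially by blast
  qed
  have fY: "\<forall>x\<in>X. f x \<in> Y" using flim by blast
  have key: "\<exists>\<delta>>0. \<forall>x\<in>X. \<forall>y\<in>Y. F x y \<le> \<delta> \<longrightarrow> e (f x) y \<le> \<epsilon>" if epos: "\<epsilon> > 0" for \<epsilon>
  proof -
    obtain \<delta> where d: "\<delta> > 0" "\<forall>x\<in>X. \<forall>y\<in>Y. \<forall>y'\<in>Y. F x y \<le> \<delta> \<and> F x y' \<le> \<delta> \<longrightarrow> e y y' \<le> \<epsilon>/2"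
      using F3[of "\<epsilon>/2"] epos by auto
    obtain K where K: "\<forall>n\<ge>K. 1 / real (Suc n) < \<delta>" using arch d(1) by blast
    show ?thesis
    proof (intro exI[of _ \<delta>] conjI ballI impI)
      show "\<delta> > 0" by fact
      fix x y assume h: "x \<in> X" "y \<in> Y" "F x y \<le> \<delta>"
      obtain N1 where N1: "\<forall>n\<ge>N1. s x n \<in> Y \<and> e (s x n) (f x) < \<epsilon>/2"
        using flim[OF h(1)] half_gt_zero[OF epos] by blast
      define n where "n = max N1 K"
      have "n \<ge> K" unfolding n_def by simp
      then have "1 / real (Suc n) < \<delta>" using K by blast
      then have "F x (s x n) \<le> \<delta>" using s[OF h(1), of n] by linarith
      then have "e (s x n) y \<le> \<epsilon>/2" using d h s by blast
      moreover have "e (s x n) (f x) < \<epsilon>/2" using N1 unfolding n_def by simp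
      moreover have "e (f x) y \<le> e (f x) (s x n) + e (s x n) y"
        using N.triangle fY h s by blast
      ultimately show "e (f x) y \<le> \<epsilon>" using N.commute[of "f x" "s x n"] by linarith
    qed
  qed
  have "cMet1_hom X d Y e f"
    unfolding cMet1_hom_iff[OF X Y]
  proof (intro conjI allI impI)
    show "\<forall>x\<in>X. f x \<in> Y" by (rule fY)
    fix \<epsilon> :: real assume "\<epsilon> > 0"
    obtain \<eta> where eta: "\<eta> > 0" "\<forall>x\<in>X. \<forall>y\<in>Y. F x y \<le> \<eta> \<longrightarrow> e (f x) y \<le> \<epsilon>/3"
      using key[of "\<epsilon>/3"] \<open>\<epsilon>>0\<close> by auto
    obtain \<delta>2 where d2: "\<delta>2 > 0" "\<forall>x\<in>X. \<forall>x'\<in>X. \<forall>y\<in>Y. \<forall>y'\<in>Y. F x y \<le> \<delta>2 \<and> d x x' \<le> \<delta>2 \<and> e y y' \<le> \<delta>2 \<longrightarrow> F x' y' \<le> \<eta>"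
      using F2[OF eta(1)] by blast
    show "\<exists>\<delta>>0. \<forall>x\<in>X. \<forall>y\<in>X. d y x < \<delta> \<longrightarrow> e (f y) (f x) < \<epsilon>"
    proof (intro exI[of _ "min \<delta>2 \<eta>"] conjI ballI impI)
      show "0 < min \<delta>2 \<eta>" using d2 eta by simp
      fix x x' assume h: "x \<in> X" "x' \<in> X" "d x' x < min \<delta>2 \<eta>"
      obtain y where y: "y \<in> Y" "F x y < min \<delta>2 \<eta>" using F4 h(1) \<open>0 < min \<delta>2 \<eta>\<close> by blast
      have "e (f x) y \<le> \<epsilon>/3" using eta h y by auto
      moreover have "F x' y \<le> \<eta>" using d2 h y M.commute[of x' x] by auto
      then have "e (f x') y \<le> \<epsilon>/3" using eta h y by auto
      moreover have "e (f x') (f x) \<le> e (f x') y + e y (f x)" using N.triangle fY h y by blast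
      ultimately show "e (f x') (f x) < \<epsilon>" using N.commute[of y "f x"] \<open>\<epsilon>>0\<close> by linarith
    qed
  qed
  moreover have "ER_eq X Y F (G_hom e f)"
    by (rule ER_eqI) (use key in \<open>auto simp: G_hom_def\<close>)
  ultimately show "\<exists>f. cMet1_hom X d Y e f \<and> ER_eq X Y F (G_hom e f)" by blast
qed


lemma ess_surj_part:
  fixes u :: "'u itself"
  assumes enc: "inj (enc :: (nat \<Rightarrow> 'u) \<Rightarrow> 'u)"
  shows "G_ess_surj u"
  unfolding G_ess_surj_def
proof (intro allI impI)
  fix X :: "'u set" and R assume ER: "ER_obj X R"
  obtain d :: "'u \<Rightarrow> 'u \<Rightarrow> real" where d0: "\<forall>x\<in>X. d x x = 0" and dsym: "\<forall>x\<in>X. \<forall>y\<in>X. d x y = d y x"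
    and dtri: "\<forall>x\<in>X. \<forall>y\<in>X. \<forall>z\<in>X. d x z \<le> d x y + d y z"
    and db: "\<forall>x\<in>X. \<forall>y\<in>X. 0 \<le> d x y \<and> d x y \<le> 1"
    and dR: "\<forall>\<epsilon>>0. \<exists>\<delta>>0. \<forall>x\<in>X. \<forall>y\<in>X. R x y \<le> \<delta> \<longrightarrow> d x y \<le> \<epsilon>"
    and Rd: "\<forall>\<epsilon>>0. \<exists>\<delta>>0. \<forall>x\<in>X. \<forall>y\<in>X. d x y \<le> \<delta> \<longrightarrow> R x y \<le> \<epsilon>"
    using metrization[OF ER] by blast
  obtain Y :: "'u set" and e \<iota> where Y: "cMet1_obj Y e" and iY: "\<forall>x\<in>X. \<iota> x \<in> Y"
    and ed: "\<forall>x\<in>X. \<forall>x'\<in>X. e (\<iota> x) (\<iota> x') = d x x'"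
    and dense: "\<forall>y\<in>Y. \<forall>\<epsilon>>0. \<exists>x\<in>X. e y (\<iota> x) < \<epsilon>"
    using completion_exists[OF enc d0 dsym dtri db] by blast
  interpret N: Metric_space Y e using Y by (simp add: cMet1_obj_def)
  have e1: "\<forall>y\<in>Y. \<forall>y'\<in>Y. e y y' \<le> 1" using Y by (simp add: cMet1_obj_def)
  have tri3: "e a d' \<le> e a b + e b c + e c d'" if "a \<in> Y" "b \<in> Y" "c \<in> Y" "d' \<in> Y" for a b c d'
  proof -
    have "e a d' \<le> e a b + e b d'" using that by (intro N.triangle) auto
    moreover have "e b d' \<le> e b c + e c d'" using that by (intro N.triangle) auto
    ultimately show ?thesis by linarith
  qed
  define F where "F x y = e (\<iota> x) y" for x y
  define H where "H y x = e y (\<iota> x)" for y x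
  have FR: "func_rel X R Y e F"
  proof (rule func_relI)
    show "\<forall>x\<in>X. \<forall>y\<in>Y. 0 \<le> F x y \<and> F x y \<le> 1" using e1 iY N.nonneg by (simp add: F_def)
    show "\<forall>x\<in>X. \<forall>\<epsilon>>0. \<exists>y\<in>Y. F x y < \<epsilon>"
    proof (intro ballI allI impI)
      fix x and \<epsilon> :: real assume "x \<in> X" "\<epsilon> > 0"
      then show "\<exists>y\<in>Y. F x y < \<epsilon>" using iY by (intro bexI[of _ "\<iota> x"]) (auto simp: F_def)
    qed
  next
    fix \<epsilon> :: real assume "\<epsilon> > 0"
    then obtain \<delta>1 where d1: "\<delta>1 > 0" "\<forall>x\<in>X. \<forall>y\<in>X. R x y \<le> \<delta>1 \<longrightarrow> d x y \<le> \<epsilon>/3"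
      using dR[rule_format, of "\<epsilon>/3"] by auto
    show "\<exists>\<delta>>0. \<forall>x\<in>X. \<forall>x'\<in>X. \<forall>y\<in>Y. \<forall>y'\<in>Y. F x y \<le> \<delta> \<and> R x x' \<le> \<delta> \<and> e y y' \<le> \<delta> \<longrightarrow> F x' y' \<le> \<epsilon>"
    proof (intro exI[of _ "min \<delta>1 (\<epsilon>/3)"] conjI ballI impI)
      show "0 < min \<delta>1 (\<epsilon>/3)" using d1 \<open>\<epsilon>>0\<close> by simp
      fix x x' y y' assume h: "x \<in> X" "x' \<in> X" "y \<in> Y" "y' \<in> Y"
        "F x y \<le> min \<delta>1 (\<epsilon>/3) \<and> R x x' \<le> min \<delta>1 (\<epsilon>/3) \<and> e y y' \<le> min \<delta>1 (\<epsilon>/3)"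
      have "d x x' \<le> \<epsilon>/3" using d1 h by auto
      moreover have "e (\<iota> x') y' \<le> e (\<iota> x') (\<iota> x) + e (\<iota> x) y + e y y'" using tri3 iY h by blast
      ultimately show "F x' y' \<le> \<epsilon>" using h ed dsym by (auto simp: F_def)
    qed
  next
    fix \<epsilon> :: real assume "\<epsilon> > 0"
    show "\<exists>\<delta>>0. \<forall>x\<in>X. \<forall>y\<in>Y. \<forall>y'\<in>Y. F x y \<le> \<delta> \<and> F x y' \<le> \<delta> \<longrightarrow> e y y' \<le> \<epsilon>"
    proof (intro exI[of _ "\<epsilon>/2"] conjI ballI impI)
      show "0 < \<epsilon>/2" using \<open>\<epsilon>>0\<close> by simp
      fix x y y' assume h: "x \<in> X" "y \<in> Y" "y' \<in> Y" "F x y \<le> \<epsilon>/2 \<and> F x y' \<le> \<epsilon>/2"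
      have "e y y' \<le> e y (\<iota> x) + e (\<iota> x) y'" using N.triangle iY h by blast
      then show "e y y' \<le> \<epsilon>" using h N.commute[of y "\<iota> x"] by (auto simp: F_def)
    qed
  qed
  have HR: "func_rel Y e X R H"
  proof (rule func_relI)
    show "\<forall>y\<in>Y. \<forall>x\<in>X. 0 \<le> H y x \<and> H y x \<le> 1" using e1 iY N.nonneg by (simp add: H_def)
    show "\<forall>y\<in>Y. \<forall>\<epsilon>>0. \<exists>x\<in>X. H y x < \<epsilon>" using dense by (simp add: H_def)
  next
    fix \<epsilon> :: real assume "\<epsilon> > 0"
    then obtain \<delta>1 where d1: "\<delta>1 > 0" "\<forall>x\<in>X. \<forall>y\<in>X. R x y \<le> \<delta>1 \<longrightarrow> d x y \<le> \<epsilon>/3"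
      using dR[rule_format, of "\<epsilon>/3"] by auto
    show "\<exists>\<delta>>0. \<forall>y\<in>Y. \<forall>y'\<in>Y. \<forall>x\<in>X. \<forall>x'\<in>X. H y x \<le> \<delta> \<and> e y y' \<le> \<delta> \<and> R x x' \<le> \<delta> \<longrightarrow> H y' x' \<le> \<epsilon>"
    proof (intro exI[of _ "min \<delta>1 (\<epsilon>/3)"] conjI ballI impI)
      show "0 < min \<delta>1 (\<epsilon>/3)" using d1 \<open>\<epsilon>>0\<close> by simp
      fix y y' x x' assume h: "y \<in> Y" "y' \<in> Y" "x \<in> X" "x' \<in> X"
        "H y x \<le> min \<delta>1 (\<epsilon>/3) \<and> e y y' \<le> min \<delta>1 (\<epsilon>/3) \<and> R x x' \<le> min \<delta>1 (\<epsilon>/3)"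
      have "d x x' \<le> \<epsilon>/3" using d1 h by auto
      moreover have "e y' (\<iota> x') \<le> e y' y + e y (\<iota> x) + e (\<iota> x) (\<iota> x')" using tri3 iY h by blast
      ultimately show "H y' x' \<le> \<epsilon>" using h ed N.commute[of y' y] by (auto simp: H_def)
    qed
  next
    fix \<epsilon> :: real assume "\<epsilon> > 0"
    then obtain \<delta>1 where d1: "\<delta>1 > 0" "\<forall>x\<in>X. \<forall>y\<in>X. d x y \<le> \<delta>1 \<longrightarrow> R x y \<le> \<epsilon>"
      using Rd by blast
    show "\<exists>\<delta>>0. \<forall>y\<in>Y. \<forall>x\<in>X. \<forall>x'\<in>X. H y x \<le> \<delta> \<and> H y x' \<le> \<delta> \<longrightarrow> R x x' \<le> \<epsilon>"
    proof (intro exI[of _ "\<delta>1/2"] conjI ballI impI)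
      show "0 < \<delta>1/2" using d1 by simp
      fix y x x' assume h: "y \<in> Y" "x \<in> X" "x' \<in> X" "H y x \<le> \<delta>1/2 \<and> H y x' \<le> \<delta>1/2"
      have "e (\<iota> x) (\<iota> x') \<le> e (\<iota> x) y + e y (\<iota> x')" using N.triangle iY h by blast
      then have "d x x' \<le> \<delta>1" using h ed N.commute[of y "\<iota> x"] by (auto simp: H_def)
      then show "R x x' \<le> \<epsilon>" using d1 h by blast
    qed
  qed
  have comp1: "ER_eq X X (ER_comp Y F H) R"
  proof (rule ER_eqI)
    fix \<epsilon> :: real assume "\<epsilon> > 0"
    then obtain \<delta>1 where d1: "\<delta>1 > 0" "\<forall>x\<in>X. \<forall>y\<in>X. d x y \<le> \<delta>1 \<longrightarrow> R x y \<le> \<epsilon>"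
      using Rd by blast
    show "\<exists>\<delta>>0. \<forall>x\<in>X. \<forall>x'\<in>X. ER_comp Y F H x x' \<le> \<delta> \<longrightarrow> R x x' \<le> \<epsilon>"
    proof (intro exI[of _ "\<delta>1/4"] conjI ballI impI)
      show "0 < \<delta>1/4" using d1 by simp
      fix x x' assume h: "x \<in> X" "x' \<in> X" "ER_comp Y F H x x' \<le> \<delta>1/4"
      have ne: "Y \<noteq> {}" using iY h by auto
      have bdd: "bdd_below ((\<lambda>y. max (F x y) (H y x')) ` Y)"
        by (rule bdd_belowI[of _ 0]) (auto simp: F_def le_max_iff_disj N.nonneg)
      have "(INF y\<in>Y. max (F x y) (H y x')) < \<delta>1/2" using h d1 by (simp add: ER_comp_def)
      then obtain y where y: "y \<in> Y" "max (F x y) (H y x') < \<delta>1/2"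
        using cINF_less_iff[OF ne bdd, of "\<delta>1/2"] by blast
      have "e (\<iota> x) (\<iota> x') \<le> e (\<iota> x) y + e y (\<iota> x')" using N.triangle iY h y by blast
      then have "d x x' \<le> \<delta>1" using h ed y by (auto simp: F_def H_def)
      then show "R x x' \<le> \<epsilon>" using d1 h by blast
    qed
  qed
  have comp2: "ER_eq Y Y (ER_comp X H F) e"
  proof (rule ER_eqI)
    fix \<epsilon> :: real assume "\<epsilon> > 0"
    show "\<exists>\<delta>>0. \<forall>y\<in>Y. \<forall>y'\<in>Y. ER_comp X H F y y' \<le> \<delta> \<longrightarrow> e y y' \<le> \<epsilon>"
    proof (intro exI[of _ "\<epsilon>/4"] conjI ballI impI)
      show "0 < \<epsilon>/4" using \<open>\<epsilon>>0\<close> by simp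
      fix y y' assume h: "y \<in> Y" "y' \<in> Y" "ER_comp X H F y y' \<le> \<epsilon>/4"
      obtain x0 where "x0 \<in> X" using dense h(1) zero_less_one by blast
      then have "X \<noteq> {}" by blast
      then have ne: "X \<noteq> {}" by auto
      have bdd: "bdd_below ((\<lambda>x. max (H y x) (F x y')) ` X)"
        by (rule bdd_belowI[of _ 0]) (auto simp: H_def le_max_iff_disj N.nonneg)
      have "(INF x\<in>X. max (H y x) (F x y')) < \<epsilon>/2" using h \<open>\<epsilon>>0\<close> by (simp add: ER_comp_def)
      then obtain x where x: "x \<in> X" "max (H y x) (F x y') < \<epsilon>/2"
        using cINF_less_iff[OF ne bdd, of "\<epsilon>/2"] by blast
      have "e y y' \<le> e y (\<iota> x) + e (\<iota> x) y'" using N.triangle iY h x by blast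
      then show "e y y' \<le> \<epsilon>" using x by (auto simp: F_def H_def)
    qed
  qed
  show "\<exists>Y e F H. cMet1_obj Y e \<and> func_rel X R Y e F \<and> func_rel Y e X R H
           \<and> ER_eq X X (ER_comp Y F H) R \<and> ER_eq Y Y (ER_comp X H F) e"
    using Y FR HR comp1 comp2 by blast
qed

theorem mainTheorem11:
  fixes u :: "'u itself"
  assumes universe: "\<exists>enc :: (nat \<Rightarrow> 'u) \<Rightarrow> 'u. inj enc"
  shows "G_equivalence u"
proof -
  obtain enc :: "(nat \<Rightarrow> 'u) \<Rightarrow> 'u" where "inj enc" using universe by blast
  then show ?thesis
    unfolding G_equivalence_def using functor_part full_part faithful_part ess_surj_part by blast
qed

end
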